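(* Let $\mathcal{X}$ be a finite set of $n$ agents and $\Gamma$ a merit distribution on $\mathbb{R}^{\mathcal{X}}$. Let $\pi^{TS}_\Gamma$ be the Thompson sampling ranking distribution: draw a merit vector $v\sim\Gamma$ and rank the agents by decreasing $v_x$. Then $\pi^{TS}_\Gamma$ is $1$-fair with respect to $\Gamma$.
   Context: A ranking of $\mathcal{X}$ is a bijection $\sigma:\{1,\dots,n\}\to\mathcal{X}$ ($\sigma(k)$ is the agent in position $k$); a ranking distribution $\pi$ is a probability distribution over rankings, with marginals $P_\pi(x,k)=\sum_{\sigma:\sigma(k)=x}\pi(\sigma)$. A merit distribution $\Gamma$ is a probability distribution over $v=(v_x)_{x\in\mathcal{X}}\in\mathbb{R}^{\mathcal{X}}$ such that every $v$ in its support has pairwise distinct entries. $\mathrm{Top}_k(x;v)$ denotes the event $|\{x': v_{x'}>v_x\}|<k$. For $\rho\in[0,1]$, $\pi$ is $\rho$-fair with respect to $\Gamma$ if $\sum_{k'=1}^{k}P_\pi(x,k')\ge\rho\cdot\Pr_{v\sim\Gamma}[\mathrm{Top}_k(x;v)]$ for all agents $x$ and positions $k$. *)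

theory Defs
  imports "HOL-Probability.Probability"
begin

definition rankings :: "(nat \<Rightarrow> 'a::finite) set" where
  "rankings = {\<sigma>. bij_betw \<sigma> {1..CARD('a)} UNIV \<and> (\<forall>k. k \<notin> {1..CARD('a)} \<longrightarrow> \<sigma> k = undefined)}"

definition is_ranking_dist :: "((nat \<Rightarrow> 'a::finite) \<Rightarrow> real) \<Rightarrow> bool" where
  "is_ranking_dist \<pi> \<longleftrightarrow> (\<forall>\<sigma>. \<pi> \<sigma> \<ge> 0) \<and> (\<forall>\<sigma>. \<sigma> \<notin> rankings \<longrightarrow> \<pi> \<sigma> = 0)
      \<and> (\<Sum>\<sigma>\<in>rankings. \<pi> \<sigma>) = 1"

definition marginal :: "((nat \<Rightarrow> 'a::finite) \<Rightarrow> real) \<Rightarrow> 'a \<Rightarrow> nat \<Rightarrow> real" where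
  "marginal \<pi> x k = (\<Sum>\<sigma>\<in>{\<sigma>\<in>rankings. \<sigma> k = x}. \<pi> \<sigma>)"

definition merit_dist :: "('a::finite \<Rightarrow> real) measure \<Rightarrow> bool" where
  "merit_dist \<Gamma> \<longleftrightarrow> prob_space \<Gamma> \<and> sets \<Gamma> = sets (PiM UNIV (\<lambda>_. borel))
      \<and> (AE v in \<Gamma>. inj v)"

definition Top :: "nat \<Rightarrow> 'a::finite \<Rightarrow> ('a \<Rightarrow> real) \<Rightarrow> bool" where
  "Top k x v \<longleftrightarrow> card {x'. v x' > v x} < k"

definition rho_fair :: "real \<Rightarrow> ('a::finite \<Rightarrow> real) measure \<Rightarrow> ((nat \<Rightarrow> 'a) \<Rightarrow> real) \<Rightarrow> bool" where
  "rho_fair \<rho> \<Gamma> \<pi> \<longleftrightarrow> (\<forall>x. \<forall>k\<in>{1..CARD('a)}.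
      (\<Sum>k'=1..k. marginal \<pi> x k') \<ge> \<rho> * measure \<Gamma> {v\<in>space \<Gamma>. Top k x v})"

definition sort_ranking :: "('a::finite \<Rightarrow> real) \<Rightarrow> nat \<Rightarrow> 'a" where
  "sort_ranking v k = (if k \<in> {1..CARD('a)} then (THE x. card {x'. v x' > v x} + 1 = k) else undefined)"

definition thompson :: "('a::finite \<Rightarrow> real) measure \<Rightarrow> (nat \<Rightarrow> 'a) \<Rightarrow> real" where
  "thompson \<Gamma> \<sigma> = measure \<Gamma> {v\<in>space \<Gamma>. sort_ranking v = \<sigma>}"

end

theory Submission
  imports Defs
begin

lemma rank_lt:
  fixes v :: "'a::finite \<Rightarrow> real"
  shows "card {x'. v x' > v x} < CARD('a)"
proof -
  have "{x'. v x' > v x} \<subset> UNIV" by auto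
  then show ?thesis by (simp add: psubset_card_mono)
qed

lemma rank_inj:
  fixes v :: "'a::finite \<Rightarrow> real"
  assumes "inj v"
  shows "inj (\<lambda>x. card {x'. v x' > v x})"
proof (rule injI, rule ccontr)
  fix x y assume eq: "card {x'. v x' > v x} = card {x'. v x' > v y}" and ne: "x \<noteq> y"
  have "v x \<noteq> v y" using assms ne by (auto dest: injD)
  then consider "v x < v y" | "v y < v x" by linarith
  then show False
  proof cases
    case 1
    then have "{x'. v x' > v y} \<subset> {x'. v x' > v x}" by auto
    then show False using eq by (metis finite psubset_card_mono less_irrefl)
  next
    case 2
    then have "{x'. v x' > v x} \<subset> {x'. v x' > v y}" by auto
    then show False using eq by (metis finite psubset_card_mono less_irrefl)
  qed
qed

lemma rank_surj:
  fixes v :: "'a::finite \<Rightarrow> real"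
  assumes "inj v" "j < CARD('a)"
  shows "\<exists>x. card {x'. v x' > v x} = j"
proof -
  let ?r = "\<lambda>x. card {x'. v x' > v x}"
  have "?r ` UNIV \<subseteq> {..<CARD('a)}" using rank_lt by auto
  moreover have "card (?r ` UNIV) = CARD('a)"
    using rank_inj[OF assms(1)] by (simp add: card_image)
  ultimately have "?r ` UNIV = {..<CARD('a)}"
    by (intro card_subset_eq) auto
  then have "j \<in> ?r ` UNIV" using assms(2) by simp
  then show ?thesis by blast
qed

lemma sort_ranking_at:
  fixes v :: "'a::finite \<Rightarrow> real"
  assumes "inj v"
  shows "sort_ranking v (card {x'. v x' > v x} + 1) = x"
proof -
  have "card {x'. v x' > v x} + 1 \<in> {1..CARD('a)}" using rank_lt[of v x] by auto
  moreover have "(THE y. card {x'. v x' > v y} + 1 = card {x'. v x' > v x} + 1) = x"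
  proof (rule the_equality)
    fix y assume "card {x'. v x' > v y} + 1 = card {x'. v x' > v x} + 1"
    then show "y = x" using injD[OF rank_inj[OF assms], of y x] by simp
  qed simp
  ultimately show ?thesis unfolding sort_ranking_def by simp
qed

lemma sort_ranking_in:
  fixes v :: "'a::finite \<Rightarrow> real"
  assumes "inj v"
  shows "sort_ranking v \<in> rankings"
proof -
  let ?r = "\<lambda>x. card {x'. v x' > v x}"
  have val: "\<exists>x. sort_ranking v k = x \<and> ?r x + 1 = k" if "k \<in> {1..CARD('a)}" for k
  proof -
    have "k - 1 < CARD('a)" using that by auto
    then obtain x where x: "?r x = k - 1" using rank_surj[OF assms, of "k-1"] by auto
    then have "?r x + 1 = k" using that by auto
    moreover have "sort_ranking v (?r x + 1) = x" by (rule sort_ranking_at[OF assms])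
    ultimately have "sort_ranking v k = x" by simp
    with \<open>?r x + 1 = k\<close> show ?thesis by blast
  qed
  have "inj_on (sort_ranking v) {1..CARD('a)}"
  proof (rule inj_onI)
    fix k k' assume a: "k \<in> {1..CARD('a)}" "k' \<in> {1..CARD('a)}" "sort_ranking v k = sort_ranking v k'"
    obtain y where y: "sort_ranking v k = y" "?r y + 1 = k" using val[OF a(1)] by blast
    obtain y' where y': "sort_ranking v k' = y'" "?r y' + 1 = k'" using val[OF a(2)] by blast
    have "y = y'" using y(1) y'(1) a(3) by simp
    then show "k = k'" using y(2) y'(2) by simp
  qed
  moreover have "sort_ranking v ` {1..CARD('a)} = UNIV"
  proof -
    have "x \<in> sort_ranking v ` {1..CARD('a)}" for x
    proof (rule image_eqI[where x="card {x'. v x' > v x} + 1"])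
      show "x = sort_ranking v (card {x'. v x' > v x} + 1)" using sort_ranking_at[OF assms, of x] by simp
      show "card {x'. v x' > v x} + 1 \<in> {1..CARD('a)}" using rank_lt[of v x] by simp
    qed
    then show ?thesis by auto
  qed
  moreover have "\<forall>k. k \<notin> {1..CARD('a)} \<longrightarrow> sort_ranking v k = undefined"
    by (simp add: sort_ranking_def)
  ultimately show ?thesis unfolding rankings_def bij_betw_def by blast
qed

lemma rankings_finite: "finite (rankings :: (nat \<Rightarrow> 'a::finite) set)"
proof -
  have "rankings \<subseteq> PiE {1..CARD('a)} (\<lambda>_. (UNIV :: 'a set))"
    unfolding rankings_def PiE_def extensional_def by auto
  moreover have "finite (PiE {1..CARD('a)} (\<lambda>_. (UNIV :: 'a set)))"
    by (rule finite_PiE) auto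
  ultimately show ?thesis by (rule finite_subset)
qed

definition relG :: "('a::finite \<times> 'a) set \<Rightarrow> nat \<Rightarrow> 'a" where
  "relG Q k = (if k \<in> {1..CARD('a)} then (THE x. card {x'. (x, x') \<in> Q} + 1 = k) else undefined)"

definition relR :: "('a::finite \<Rightarrow> real) \<Rightarrow> ('a \<times> 'a) set" where
  "relR v = {p. v (fst p) < v (snd p)}"

lemma sort_ranking_relG: "sort_ranking v = relG (relR v)"
  unfolding sort_ranking_def relG_def relR_def by (rule ext) simp

lemma E_meas:
  fixes \<Gamma> :: "('a::finite \<Rightarrow> real) measure"
  assumes "merit_dist \<Gamma>"
  shows "{v\<in>space \<Gamma>. sort_ranking v = \<sigma>} \<in> sets \<Gamma>"
proof -
  have ss: "sets \<Gamma> = sets (PiM UNIV (\<lambda>_. borel))" using assms merit_dist_def by blast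
  have comp: "(\<lambda>v. v a) \<in> borel_measurable \<Gamma>" for a :: 'a
  proof -
    have "(\<lambda>v. v a) \<in> PiM UNIV (\<lambda>_. borel) \<rightarrow>\<^sub>M borel"
      by (rule measurable_component_singleton) simp
    then show ?thesis by (subst measurable_cong_sets[OF ss refl])
  qed
  have "relR \<in> measurable \<Gamma> (count_space UNIV)"
  proof (subst measurable_count_space_eq2_countable, safe)
    fix Q :: "('a \<times> 'a) set"
    have "relR -` {Q} \<inter> space \<Gamma> = {v\<in>space \<Gamma>. \<forall>p\<in>UNIV. (v (fst p) < v (snd p)) = (p \<in> Q)}"
      unfolding relR_def by auto
    also have "\<dots> \<in> sets \<Gamma>"
    proof (rule sets.sets_Collect_finite_All)
      fix p :: "'a \<times> 'a"
      have "Measurable.pred \<Gamma> (\<lambda>v. v (fst p) < v (snd p))" by (rule borel_measurable_pred_less[OF comp comp])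
      then show "{v\<in>space \<Gamma>. (v (fst p) < v (snd p)) = (p \<in> Q)} \<in> sets \<Gamma>"
        by (cases "p \<in> Q") (simp_all add: pred_def sets.sets_Collect_neg)
    qed simp
    finally show "relR -` {Q} \<inter> space \<Gamma> \<in> sets \<Gamma>" .
  qed simp
  then have "(\<lambda>v. relG (relR v)) \<in> measurable \<Gamma> (count_space UNIV)"
    by (rule measurable_compose) simp
  then have "(\<lambda>v. relG (relR v)) -` {\<sigma>} \<inter> space \<Gamma> \<in> sets \<Gamma>"
    by (rule measurable_sets) simp
  moreover have "(\<lambda>v. relG (relR v)) -` {\<sigma>} \<inter> space \<Gamma> = {v\<in>space \<Gamma>. sort_ranking v = \<sigma>}"
    by (auto simp: sort_ranking_relG)
  ultimately show ?thesis by simp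
qed

theorem proposition3:
  fixes \<Gamma> :: "('a::finite \<Rightarrow> real) measure"
  assumes "merit_dist \<Gamma>"
  shows "rho_fair 1 \<Gamma> (thompson \<Gamma>)"
  unfolding rho_fair_def
proof (intro allI ballI)
  fix x :: 'a and k assume k: "k \<in> {1..CARD('a)}"
  interpret P: prob_space \<Gamma> using assms merit_dist_def by blast
  define E where "E \<sigma> = {v\<in>space \<Gamma>. sort_ranking v = \<sigma>}" for \<sigma>
  define A where "A k' = {\<sigma>\<in>rankings. \<sigma> k' = (x::'a)}" for k'
  define S where "S = (\<Union>k'\<in>{1..k}. A k')"
  have Emeas: "E \<sigma> \<in> sets \<Gamma>" for \<sigma> unfolding E_def using E_meas[OF assms] .
  have finA: "finite (A k')" for k' unfolding A_def by (rule finite_subset[OF _ rankings_finite]) auto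
  have finS: "finite S" unfolding S_def using finA by auto
  have "AE v in \<Gamma>. inj v" using assms merit_dist_def by blast
  then obtain N where N: "{v\<in>space \<Gamma>. \<not> inj v} \<subseteq> N" "emeasure \<Gamma> N = 0" "N \<in> sets \<Gamma>"
    by (rule AE_E)
  have sub: "{v\<in>space \<Gamma>. Top k x v} \<subseteq> (\<Union>\<sigma>\<in>S. E \<sigma>) \<union> N"
  proof
    fix v assume v: "v \<in> {v\<in>space \<Gamma>. Top k x v}"
    show "v \<in> (\<Union>\<sigma>\<in>S. E \<sigma>) \<union> N"
    proof (cases "inj v")
      case True
      let ?c = "card {x'. v x' > v x} + 1"
      have "?c \<in> {1..k}" using v by (auto simp: Top_def)
      moreover have "sort_ranking v \<in> A ?c"
        unfolding A_def using sort_ranking_at[OF True] sort_ranking_in[OF True] by auto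
      ultimately have "sort_ranking v \<in> S" unfolding S_def by blast
      moreover have "v \<in> E (sort_ranking v)" unfolding E_def using v by auto
      ultimately show ?thesis by blast
    next
      case False then show ?thesis using v N(1) by auto
    qed
  qed
  have UE: "(\<Union>\<sigma>\<in>S. E \<sigma>) \<in> sets \<Gamma>" using finS Emeas by auto
  have "measure \<Gamma> {v\<in>space \<Gamma>. Top k x v} \<le> measure \<Gamma> ((\<Union>\<sigma>\<in>S. E \<sigma>) \<union> N)"
    using sub UE N(3) by (intro P.finite_measure_mono) auto
  also have "\<dots> \<le> measure \<Gamma> (\<Union>\<sigma>\<in>S. E \<sigma>) + measure \<Gamma> N"
    using UE N(3) by (rule measure_Un_le)
  also have "measure \<Gamma> N = 0" using N(2) by (simp add: P.emeasure_eq_measure)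
  also have "measure \<Gamma> (\<Union>\<sigma>\<in>S. E \<sigma>) \<le> (\<Sum>\<sigma>\<in>S. measure \<Gamma> (E \<sigma>))"
    using finS Emeas by (intro P.finite_measure_subadditive_finite) auto
  also have "(\<Sum>\<sigma>\<in>S. measure \<Gamma> (E \<sigma>)) = (\<Sum>k'\<in>{1..k}. \<Sum>\<sigma>\<in>A k'. measure \<Gamma> (E \<sigma>))"
    unfolding S_def
  proof (rule sum.UNION_disjoint)
    show "\<forall>i\<in>{1..k}. \<forall>j\<in>{1..k}. i \<noteq> j \<longrightarrow> A i \<inter> A j = {}"
    proof (intro ballI impI)
      fix i j assume ij: "i \<in> {1..k}" "j \<in> {1..k}" "i \<noteq> j"
      show "A i \<inter> A j = {}"
      proof (rule ccontr)
        assume "A i \<inter> A j \<noteq> {}"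
        then obtain \<sigma> where "\<sigma> \<in> rankings" "\<sigma> i = x" "\<sigma> j = x" unfolding A_def by auto
        then have "inj_on \<sigma> {1..CARD('a)}" unfolding rankings_def bij_betw_def by auto
        then show False using ij k \<open>\<sigma> i = x\<close> \<open>\<sigma> j = x\<close> by (auto dest: inj_onD)
      qed
    qed
  qed (use finA in auto)
  also have "\<dots> = (\<Sum>k'=1..k. marginal (thompson \<Gamma>) x k')"
    unfolding marginal_def thompson_def A_def E_def by simp
  finally show "1 * measure \<Gamma> {v\<in>space \<Gamma>. Top k x v} \<le> (\<Sum>k'=1..k. marginal (thompson \<Gamma>) x k')"
    by simp
qed

end
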